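(* Let $\rho_{AB}$ and $\sigma_B$ be quantum states, $\varepsilon\in(0,1)$, and let $S_A$ be a convex set of quantum states on register $A$. There exists an operator $M^*$ satisfying $\mathrm{Tr}[M^*\rho_{AB}]\ge1-\varepsilon$ such that for all quantum states $\tau_A\in S_A$, $$\mathrm{Tr}[M^*(\tau_A\otimes\sigma_B)]\le 2^{-\tilde{\mathrm{I}}^{\varepsilon,S_A}_{\mathrm{H}}(A:B)_{\rho_{AB},\sigma_B}}.$$
   Context: Finite-dimensional Hilbert spaces; $\log$ base 2. $\mathrm{D}^{\varepsilon}_{\mathrm{H}}(\rho\|\sigma)=\max\{-\log\mathrm{Tr}[M\sigma]: 0\preceq M\preceq \mathbb{I},\ \mathrm{Tr}[M\rho]\ge 1-\varepsilon\}$. For a convex set $S_A$ of states on $A$, $\tilde{\mathrm{I}}^{\varepsilon,S_A}_{\mathrm{H}}(A:B)_{\rho_{AB},\sigma_B}=\min_{\tau_A\in S_A}\mathrm{D}^{\varepsilon}_{\mathrm{H}}(\rho_{AB}\|\tau_A\otimes\sigma_B)$. *)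

theory Defs
  imports "HOL-Analysis.Analysis" "HOL-Library.Complex_Order"
begin

text \<open>Operators on a finite-dimensional Hilbert space with orthonormal basis indexed by
  the finite type 'n are matrices of type complex^'n^'n. A bipartite system AB has index
  type 'a \<times> 'b.\<close>

definition psd :: "complex^'n^'n \<Rightarrow> bool" where
  "psd M \<longleftrightarrow> (\<forall>v::complex^'n. 0 \<le> (\<Sum>i\<in>UNIV. \<Sum>j\<in>UNIV. cnj (v$i) * M$i$j * v$j))"

definition loewner_le :: "complex^'n^'n \<Rightarrow> complex^'n^'n \<Rightarrow> bool" where
  "loewner_le M N \<longleftrightarrow> psd (N - M)"

definition qstate :: "complex^'n^'n \<Rightarrow> bool" where
  "qstate \<rho> \<longleftrightarrow> psd \<rho> \<and> trace \<rho> = 1"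

definition tensor :: "complex^'a^'a \<Rightarrow> complex^'b^'b \<Rightarrow> complex^('a\<times>'b)^('a\<times>'b)" where
  "tensor A B = (\<chi> p q. A$(fst p)$(fst q) * B$(snd p)$(snd q))"

text \<open>Tr[M\<rho>] (real part; it is real for the Hermitian operators considered).\<close>
definition tr_prod :: "complex^'n^'n \<Rightarrow> complex^'n^'n \<Rightarrow> real" where
  "tr_prod M \<rho> = Re (trace (M ** \<rho>))"

definition test :: "complex^'n^'n \<Rightarrow> bool" where
  "test M \<longleftrightarrow> psd M \<and> loewner_le M (mat 1)"

definition neglog2 :: "real \<Rightarrow> ereal" where
  "neglog2 x = (if x \<le> 0 then \<infinity> else ereal (- log 2 x))"

text \<open>2^(-x) for x in the extended reals, with 2^(-\<infinity>) = 0
  (the value at -\<infinity> never occurs and is set to 0 arbitrarily).\<close>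
definition pow2neg :: "ereal \<Rightarrow> real" where
  "pow2neg x = (case x of ereal r \<Rightarrow> 2 powr (- r) | _ \<Rightarrow> 0)"

text \<open>Hypothesis testing relative entropy (max over tests, written as Sup; it is attained).\<close>
definition D_H :: "real \<Rightarrow> complex^'n^'n \<Rightarrow> complex^'n^'n \<Rightarrow> ereal" where
  "D_H \<epsilon> \<rho> \<sigma> = Sup {neglog2 (tr_prod M \<sigma>) | M. test M \<and> tr_prod M \<rho> \<ge> 1 - \<epsilon>}"

definition I_H_tilde :: "real \<Rightarrow> (complex^'a^'a) set \<Rightarrow> complex^('a\<times>'b)^('a\<times>'b)
    \<Rightarrow> complex^'b^'b \<Rightarrow> ereal" where
  "I_H_tilde \<epsilon> S \<rho> \<sigma> = (INF \<tau>\<in>S. D_H \<epsilon> \<rho> (tensor \<tau> \<sigma>))"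

end

theory Submission
  imports Defs
begin


lemma two_point:
  fixes f :: "'v::euclidean_space \<Rightarrow> 'w::real_vector \<Rightarrow> real"
  assumes lin1: "\<And>M N x t. f ((1-t) *\<^sub>R M + t *\<^sub>R N) x = (1-t) * f M x + t * f N x"
    and lin2: "\<And>M x y t. f M ((1-t) *\<^sub>R x + t *\<^sub>R y) = (1-t) * f M x + t * f M y"
    and cont: "\<And>x. continuous_on UNIV (\<lambda>M. f M x)"
    and T: "compact T" "convex T"
    and H: "\<forall>M\<in>T. f M x > u \<or> f M y > u"
  shows "\<exists>t\<in>{0..1}. \<forall>M\<in>T. f M ((1-t) *\<^sub>R x + t *\<^sub>R y) > u"
proof (cases "T = {}")
  case True then show ?thesis by auto
next
  case False
  define C where "C = (\<lambda>M. (f M x, f M y)) ` T"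
  define Q where "Q = {p::real\<times>real. fst p \<le> u \<and> snd p \<le> u}"
  have cC: "compact C" unfolding C_def
    by (intro compact_continuous_image T continuous_on_Pair continuous_on_subset[OF cont]) auto
  have vC: "convex C" unfolding convex_def C_def
  proof (intro ballI allI impI, elim imageE)
    fix a b :: real and p q M N assume ab: "0 \<le> a" "0 \<le> b" "a + b = 1"
      and p: "p = (f M x, f M y)" "M \<in> T" and q: "q = (f N x, f N y)" "N \<in> T"
    have "a *\<^sub>R M + b *\<^sub>R N \<in> T" using T(2) ab p q unfolding convex_def by auto
    moreover have "a *\<^sub>R p + b *\<^sub>R q = (\<lambda>M. (f M x, f M y)) (a *\<^sub>R M + b *\<^sub>R N)"
    proof -
      have a': "a = 1 - b" using ab by simp
      show ?thesis using p q unfolding a' by (simp add: lin1)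
    qed
    ultimately show "a *\<^sub>R p + b *\<^sub>R q \<in> (\<lambda>M. (f M x, f M y)) ` T" by blast
  qed
  have cQ: "closed Q" unfolding Q_def
    by (intro closed_Collect_conj closed_Collect_le continuous_intros)
  have vQ: "convex Q" unfolding Q_def convex_def by (auto intro: convex_bound_le)
  have dis: "Q \<inter> C = {}" using H unfolding Q_def C_def by auto
  have Cne: "C \<noteq> {}" using False C_def by auto
  obtain a b where ab: "\<forall>p\<in>Q. inner a p < b" "\<forall>p\<in>C. inner a p > b"
    using separating_hyperplane_closed_compact[OF vQ cQ vC cC Cne dis] by blast
  obtain a1 a2 where a: "a = (a1, a2)" by fastforce
  have Qin: "\<And>s1 s2. s1 \<le> u \<Longrightarrow> s2 \<le> u \<Longrightarrow> a1 * s1 + a2 * s2 < b"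
    using ab(1) unfolding Q_def a by auto
  have a1: "a1 \<ge> 0"
  proof (rule ccontr)
    assume "\<not> a1 \<ge> 0"
    hence n: "a1 < 0" by simp
    define s where "s = u - (\<bar>b\<bar> + \<bar>a2 * u\<bar> + \<bar>a1 * u\<bar> + 1) / (- a1)"
    have "s \<le> u" using n by (simp add: s_def divide_nonneg_neg)
    have "a1 * s = a1 * u + (\<bar>b\<bar> + \<bar>a2 * u\<bar> + \<bar>a1 * u\<bar> + 1)"
      using n by (simp add: s_def field_simps)
    with Qin[OF \<open>s \<le> u\<close> order_refl] show False by linarith
  qed
  have a2: "a2 \<ge> 0"
  proof (rule ccontr)
    assume "\<not> a2 \<ge> 0"
    hence n: "a2 < 0" by simp
    define s where "s = u - (\<bar>b\<bar> + \<bar>a2 * u\<bar> + \<bar>a1 * u\<bar> + 1) / (- a2)"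
    have "s \<le> u" using n by (simp add: s_def divide_nonneg_neg)
    have "a2 * s = a2 * u + (\<bar>b\<bar> + \<bar>a2 * u\<bar> + \<bar>a1 * u\<bar> + 1)"
      using n by (simp add: s_def field_simps)
    with Qin[OF order_refl \<open>s \<le> u\<close>] show False by linarith
  qed
  have Cin: "\<And>M. M \<in> T \<Longrightarrow> a1 * f M x + a2 * f M y > b"
    using ab(2) unfolding C_def a by auto
  obtain M0 where "M0 \<in> T" using False by auto
  have pos: "a1 + a2 > 0"
  proof (rule ccontr)
    assume "\<not> a1 + a2 > 0"
    hence "a1 = 0" "a2 = 0" using a1 a2 by auto
    thus False using Cin[OF \<open>M0 \<in> T\<close>] Qin[of u u] by simp
  qed
  have bu: "(a1 + a2) * u < b" using Qin[of u u] by (simp add: algebra_simps)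
  define t where "t = a2 / (a1 + a2)"
  have t01: "t \<in> {0..1}" using a1 a2 pos by (simp add: t_def field_simps)
  have "\<forall>M\<in>T. f M ((1-t) *\<^sub>R x + t *\<^sub>R y) > u"
  proof
    fix M assume "M \<in> T"
    have "f M ((1-t) *\<^sub>R x + t *\<^sub>R y) = (a1 * f M x + a2 * f M y) / (a1 + a2)"
    proof -
      have e: "1 - t = a1 / (a1 + a2)" using pos by (simp add: t_def field_simps)
      have "f M ((1-t) *\<^sub>R x + t *\<^sub>R y) = (1-t) * f M x + t * f M y" by (rule lin2)
      also have "\<dots> = (a1 * f M x + a2 * f M y) / (a1 + a2)" unfolding e
        using pos by (simp add: t_def add_divide_distrib)
      finally show ?thesis .
    qed
    also have "\<dots> > u" using Cin[OF \<open>M \<in> T\<close>] bu pos by (simp add: field_simps)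
    finally show "f M ((1-t) *\<^sub>R x + t *\<^sub>R y) > u" .
  qed
  with t01 show ?thesis by blast
qed

lemma finite_minimax:
  fixes f :: "'v::euclidean_space \<Rightarrow> 'w::real_vector \<Rightarrow> real"
  assumes lin1: "\<And>M N x t. f ((1-t) *\<^sub>R M + t *\<^sub>R N) x = (1-t) * f M x + t * f N x"
    and lin2: "\<And>M x y t. f M ((1-t) *\<^sub>R x + t *\<^sub>R y) = (1-t) * f M x + t * f M y"
    and cont: "\<And>x. continuous_on UNIV (\<lambda>M. f M x)"
    and F: "finite F" "F \<noteq> {}"
  shows "\<forall>T. compact T \<longrightarrow> convex T \<longrightarrow> (\<forall>M\<in>T. \<exists>x\<in>F. f M x > u)
     \<longrightarrow> (\<exists>x\<in>convex hull F. \<forall>M\<in>T. f M x > u)"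
  using F
proof (induction F rule: finite_ne_induct)
  case (singleton x)
  then show ?case by (auto intro: hull_inc)
next
  case (insert x F)
  show ?case
  proof (intro allI impI)
    fix T :: "'v set" assume T: "compact T" "convex T" and H: "\<forall>M\<in>T. \<exists>y\<in>insert x F. f M y > u"
    define T0 where "T0 = T \<inter> {M. f M x \<le> u}"
    have cl: "closed {M. f M x \<le> u}"
      by (rule closed_Collect_le[OF cont continuous_on_const])
    have cT0: "compact T0" unfolding T0_def by (rule compact_Int_closed[OF T(1) cl])
    have cv: "convex {M. f M x \<le> u}"
    proof (rule convexI)
      fix M N :: 'v and a b :: real assume "M \<in> {M. f M x \<le> u}" "N \<in> {M. f M x \<le> u}" "0 \<le> a" "0 \<le> b" "a + b = 1"
      moreover have "a = 1 - b" using \<open>a + b = 1\<close> by simp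
      ultimately show "a *\<^sub>R M + b *\<^sub>R N \<in> {M. f M x \<le> u}"
        by (simp add: lin1 convex_bound_le)
    qed
    have vT0: "convex T0" unfolding T0_def by (rule convex_Int[OF T(2) cv])
    have "\<forall>M\<in>T0. \<exists>y\<in>F. f M y > u" using H unfolding T0_def by auto
    then obtain x0 where x0: "x0 \<in> convex hull F" "\<forall>M\<in>T0. f M x0 > u"
      using insert.IH cT0 vT0 by blast
    have "\<forall>M\<in>T. f M x0 > u \<or> f M x > u" using x0(2) unfolding T0_def by force
    then obtain t where t: "t \<in> {0..1}" "\<forall>M\<in>T. f M ((1-t) *\<^sub>R x0 + t *\<^sub>R x) > u"
      using two_point[OF lin1 lin2 cont T] by blast
    have "x0 \<in> convex hull (insert x F)" using x0(1) hull_mono[of F "insert x F"] by blast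
    moreover have "x \<in> convex hull (insert x F)" by (simp add: hull_inc)
    ultimately have "(1-t) *\<^sub>R x0 + t *\<^sub>R x \<in> convex hull (insert x F)"
      using t(1) by (intro convexD[OF convex_convex_hull]) auto
    with t(2) show "\<exists>y\<in>convex hull (insert x F). \<forall>M\<in>T. f M y > u" by blast
  qed
qed



lemma tr_prod_alt: "tr_prod M X = (\<Sum>i\<in>UNIV. \<Sum>k\<in>UNIV. Re (M$i$k * X$k$i))"
  by (simp add: tr_prod_def trace_def matrix_matrix_mult_def Re_sum)

lemma tr_prod_lin1: "tr_prod (a *\<^sub>R M + b *\<^sub>R N) X = a * tr_prod M X + b * tr_prod N X"
  unfolding tr_prod_alt sum_distrib_left sum.distrib[symmetric]
  by (intro sum.cong refl) (simp add: algebra_simps)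

lemma tr_prod_lin2: "tr_prod M (a *\<^sub>R X + b *\<^sub>R Y) = a * tr_prod M X + b * tr_prod M Y"
  unfolding tr_prod_alt sum_distrib_left sum.distrib[symmetric]
  by (intro sum.cong refl) (simp add: algebra_simps)

lemma tensor_lin: "tensor (a *\<^sub>R X + b *\<^sub>R Y) S = a *\<^sub>R tensor X S + b *\<^sub>R tensor Y S"
  by (simp add: tensor_def vec_eq_iff) (simp add: scaleR_conv_of_real algebra_simps)

lemma tr_prod_cont: "continuous_on UNIV (\<lambda>M. tr_prod M X)"
  unfolding tr_prod_alt by (intro continuous_intros)

lemma trace_tensor: "trace (tensor A B) = trace A * trace B"
proof -
  have "trace (tensor A B) = (\<Sum>p\<in>UNIV \<times> UNIV. A$fst p$fst p * B$snd p$snd p)"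
    unfolding trace_def tensor_def UNIV_Times_UNIV by simp
  also have "\<dots> = (\<Sum>i\<in>UNIV. \<Sum>j\<in>UNIV. A$i$i * B$j$j)"
    by (simp add: sum.cartesian_product split_def)
  also have "\<dots> = trace A * trace B" by (simp add: trace_def sum_product)
  finally show ?thesis .
qed

lemma tr_prod_one: "tr_prod (mat 1) X = Re (trace X)"
  by (simp add: tr_prod_def)

lemma psd_one: "psd (mat 1::complex^'n^'n)"
  unfolding psd_def
proof
  fix v :: "complex^'n"
  have "(\<Sum>i\<in>UNIV. \<Sum>j\<in>UNIV. cnj (v$i) * mat 1 $ i $ j * v$j) = (\<Sum>i\<in>UNIV. cnj (v$i) * v$i)"
  proof -
    have "\<And>i j. cnj (v$i) * mat 1 $ i $ j * v$j = (if i = j then cnj (v$i) * v$j else 0)"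
      by (simp add: mat_def)
    then show ?thesis by simp
  qed
  also have "\<dots> \<ge> 0"
  proof (intro sum_nonneg)
    fix i
    show "0 \<le> cnj (v$i) * v$i" by (simp add: less_eq_complex_def)
  qed
  finally show "0 \<le> (\<Sum>i\<in>UNIV. \<Sum>j\<in>UNIV. cnj (v$i) * mat 1 $ i $ j * v$j)" .
qed

lemma psd_zero: "psd (0::complex^'n^'n)"
  unfolding psd_def by (simp add: zero_vec_def)

lemma test_one: "test (mat 1::complex^'n^'n)"
  unfolding test_def loewner_le_def diff_self using psd_one psd_zero by blast



lemma sum_two:
  fixes g :: "'n::finite \<Rightarrow> complex \<Rightarrow> complex"
  assumes "i \<noteq> j" "\<And>k. g k 0 = 0"
  shows "(\<Sum>k\<in>UNIV. g k (if k = i then x else if k = j then y else 0)) = g i x + g j y"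
proof -
  have "\<And>k. g k (if k = i then x else if k = j then y else 0) = (if k = i then g i x else 0) + (if k = j then g j y else 0)"
    using assms by auto
  then show ?thesis by (simp add: sum.distrib)
qed

lemma psd_quad2:
  fixes P :: "complex^'n^'n"
  assumes "psd P" "i \<noteq> j"
  shows "0 \<le> P$i$i + c * P$i$j + cnj c * P$j$i + cnj c * c * P$j$j"
proof -
  define v :: "complex^'n" where "v = (\<chi> k. if k = i then 1 else if k = j then c else 0)"
  have v: "\<And>k. v$k = (if k = i then 1 else if k = j then c else 0)" by (simp add: v_def)
  have inner: "\<And>k. (\<Sum>l\<in>UNIV. cnj (v$k) * P$k$l * v$l) = cnj (v$k) * (P$k$i + P$k$j * c)"
  proof -
    fix k
    have "(\<Sum>l\<in>UNIV. cnj (v$k) * P$k$l * v$l) = (\<Sum>l\<in>UNIV. (\<lambda>l z. cnj (v$k) * P$k$l * z) l (if l = i then 1 else if l = j then c else 0))"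
      by (simp add: v)
    also have "\<dots> = cnj (v$k) * (P$k$i + P$k$j * c)"
      by (subst sum_two[OF assms(2)]) (auto simp: algebra_simps)
    finally show "(\<Sum>l\<in>UNIV. cnj (v$k) * P$k$l * v$l) = cnj (v$k) * (P$k$i + P$k$j * c)" .
  qed
  have "(\<Sum>k\<in>UNIV. \<Sum>l\<in>UNIV. cnj (v$k) * P$k$l * v$l) = (\<Sum>k\<in>UNIV. (\<lambda>k z. cnj z * (P$k$i + P$k$j * c)) k (if k = i then 1 else if k = j then c else 0))"
    unfolding inner by (simp only: v)
  also have "\<dots> = P$i$i + c * P$i$j + cnj c * P$j$i + cnj c * c * P$j$j"
    by (subst sum_two[OF assms(2)]) (auto simp: algebra_simps)
  finally have e: "(\<Sum>k\<in>UNIV. \<Sum>l\<in>UNIV. cnj (v$k) * P$k$l * v$l) = P$i$i + c * P$i$j + cnj c * P$j$i + cnj c * c * P$j$j" .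
  have "0 \<le> (\<Sum>k\<in>UNIV. \<Sum>l\<in>UNIV. cnj (v$k) * P$k$l * v$l)"
    using assms(1) unfolding psd_def by (rule spec)
  then show ?thesis unfolding e .
qed

lemma psd_diag:
  fixes P :: "complex^'n^'n"
  assumes "psd P"
  shows "0 \<le> P$i$i"
proof -
  define v :: "complex^'n" where "v = (\<chi> k. if k = i then 1 else 0)"
  have v: "\<And>k. v$k = (if k = i then 1 else 0)" by (simp add: v_def)
  have inner: "\<And>k. (\<Sum>l\<in>UNIV. cnj (v$k) * P$k$l * v$l) = cnj (v$k) * P$k$i"
  proof -
    fix k
    have "\<And>l. cnj (v$k) * P$k$l * v$l = (if l = i then cnj (v$k) * P$k$i else 0)"
      by (simp add: v)
    then show "(\<Sum>l\<in>UNIV. cnj (v$k) * P$k$l * v$l) = cnj (v$k) * P$k$i" by simp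
  qed
  have "\<And>k. cnj (v$k) * P$k$i = (if k = i then P$i$i else 0)" by (simp add: v)
  then have e: "(\<Sum>k\<in>UNIV. \<Sum>l\<in>UNIV. cnj (v$k) * P$k$l * v$l) = P$i$i"
    unfolding inner by simp
  have "0 \<le> (\<Sum>k\<in>UNIV. \<Sum>l\<in>UNIV. cnj (v$k) * P$k$l * v$l)"
    using assms(1) unfolding psd_def by (rule spec)
  then show ?thesis unfolding e .
qed

lemma test_entry_bound:
  fixes M :: "complex^'n^'n"
  assumes "test M"
  shows "cmod (M$i$j) \<le> 2"
proof -
  have p: "psd M" and q: "psd (mat 1 - M)" using assms unfolding test_def loewner_le_def by auto
  have d: "\<And>k. 0 \<le> Re (M$k$k) \<and> Re (M$k$k) \<le> 1 \<and> Im (M$k$k) = 0"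
  proof -
    fix k
    have "0 \<le> M$k$k" by (rule psd_diag[OF p])
    moreover have "0 \<le> (mat 1 - M)$k$k" by (rule psd_diag[OF q])
    ultimately show "0 \<le> Re (M$k$k) \<and> Re (M$k$k) \<le> 1 \<and> Im (M$k$k) = 0"
      by (simp add: less_eq_complex_def mat_def)
  qed
  show ?thesis
  proof (cases "i = j")
    case True
    then show ?thesis using d[of i] cmod_le[of "M$i$i"] by simp
  next
    case False
    have c1: "0 \<le> M$i$i + 1 * M$i$j + cnj 1 * M$j$i + cnj 1 * 1 * M$j$j" by (rule psd_quad2[OF p False])
    have c2: "0 \<le> M$i$i + (-1) * M$i$j + cnj (-1) * M$j$i + cnj (-1) * (-1) * M$j$j" by (rule psd_quad2[OF p False])
    have c3: "0 \<le> M$i$i + \<i> * M$i$j + cnj \<i> * M$j$i + cnj \<i> * \<i> * M$j$j" by (rule psd_quad2[OF p False])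
    have c4: "0 \<le> M$i$i + (-\<i>) * M$i$j + cnj (-\<i>) * M$j$i + cnj (-\<i>) * (-\<i>) * M$j$j" by (rule psd_quad2[OF p False])
    have "\<bar>Re (M$i$j)\<bar> \<le> 1" "\<bar>Im (M$i$j)\<bar> \<le> 1"
      using c1 c2 c3 c4 d[of i] d[of j] by (auto simp: less_eq_complex_def)
    then show ?thesis using cmod_le[of "M$i$j"] by simp
  qed
qed


lemma closed_psd:
  fixes h :: "complex^'m^'m \<Rightarrow> complex^'n^'n"
  assumes h: "continuous_on UNIV h"
  shows "closed {M. psd (h M)}"
proof -
  have e: "{M. psd (h M)} = (\<Inter>v. {M. 0 \<le> Re (\<Sum>i\<in>UNIV. \<Sum>j\<in>UNIV. cnj (v$i) * h M $i$j * v$j)} \<inter>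
      {M. Im (\<Sum>i\<in>UNIV. \<Sum>j\<in>UNIV. cnj (v$i) * h M $i$j * v$j) = 0})"
    by (auto simp: psd_def less_eq_complex_def)
  have c: "\<And>i j. continuous_on UNIV (\<lambda>M. h M $ i $ j)"
    by (intro continuous_intros h)
  show ?thesis unfolding e
    by (intro closed_INT ballI closed_Int closed_Collect_le closed_Collect_eq continuous_intros c)
qed

lemma norm_vec_le_sum: "norm (x::'a::real_normed_vector^'n) \<le> (\<Sum>i\<in>UNIV. norm (x$i))"
  by (simp add: norm_vec_def L2_set_le_sum)

lemma compact_tests:
  fixes \<rho> :: "complex^'n^'n"
  shows "compact {M. test M \<and> tr_prod M \<rho> \<ge> r}"
proof (rule compact_eq_bounded_closed[THEN iffD2, OF conjI])
  show "bounded {M. test M \<and> tr_prod M \<rho> \<ge> r}"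
    unfolding bounded_iff
  proof (intro exI ballI)
    fix M assume "M \<in> {M. test M \<and> tr_prod M \<rho> \<ge> r}"
    hence t: "test M" by simp
    have "norm M \<le> (\<Sum>i\<in>UNIV. norm (M$i))" by (rule norm_vec_le_sum)
    also have "\<dots> \<le> (\<Sum>i\<in>UNIV. \<Sum>j\<in>UNIV. norm (M$i$j))"
      by (intro sum_mono norm_vec_le_sum)
    also have "\<dots> \<le> (\<Sum>i\<in>(UNIV::'n set). \<Sum>j\<in>(UNIV::'n set). 2)"
      by (intro sum_mono test_entry_bound[OF t, unfolded norm_complex_def[symmetric]])
    finally show "norm M \<le> real (CARD('n) * CARD('n)) * 2" by simp
  qed
  show "closed {M. test M \<and> tr_prod M \<rho> \<ge> r}"
  proof -
    have e: "{M. test M \<and> tr_prod M \<rho> \<ge> r} = {M. psd ((\<lambda>M. M) M)} \<inter> {M. psd ((\<lambda>M. mat 1 - M) M)} \<inter> {M. r \<le> tr_prod M \<rho>}"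
      by (auto simp: test_def loewner_le_def)
    show ?thesis unfolding e
      by (intro closed_Int closed_psd closed_Collect_le continuous_intros tr_prod_cont)
  qed
qed

lemma psd_comb:
  fixes M N :: "complex^'n^'n"
  assumes "psd M" "psd N" "0 \<le> a" "0 \<le> b"
  shows "psd (a *\<^sub>R M + b *\<^sub>R N)"
  unfolding psd_def
proof
  fix v :: "complex^'n"
  let ?q = "\<lambda>M::complex^'n^'n. (\<Sum>i\<in>UNIV. \<Sum>j\<in>UNIV. cnj (v$i) * M$i$j * v$j)"
  have "?q (a *\<^sub>R M + b *\<^sub>R N) = of_real a * ?q M + of_real b * ?q N"
    unfolding sum_distrib_left sum.distrib[symmetric]
    by (intro sum.cong refl) (simp only: vector_add_component vector_scaleR_component, simp add: scaleR_conv_of_real algebra_simps)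
  moreover have "0 \<le> ?q M" "0 \<le> ?q N" using assms(1,2) unfolding psd_def by blast+
  ultimately show "0 \<le> ?q (a *\<^sub>R M + b *\<^sub>R N)"
    using assms(3,4) by (simp add: less_eq_complex_def)
qed

lemma convex_tests:
  fixes \<rho> :: "complex^'n^'n"
  shows "convex {M. test M \<and> tr_prod M \<rho> \<ge> r}"
proof (rule convexI)
  fix M N :: "complex^'n^'n" and a b :: real
  assume M: "M \<in> {M. test M \<and> tr_prod M \<rho> \<ge> r}" and N: "N \<in> {M. test M \<and> tr_prod M \<rho> \<ge> r}"
    and ab: "0 \<le> a" "0 \<le> b" "a + b = 1"
  have e: "mat 1 - (a *\<^sub>R M + b *\<^sub>R N) = a *\<^sub>R (mat 1 - M) + b *\<^sub>R (mat 1 - N)"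
  proof -
    have "a *\<^sub>R (mat 1 - M) + b *\<^sub>R (mat 1 - N) = (a + b) *\<^sub>R (mat 1 :: complex^'n^'n) - (a *\<^sub>R M + b *\<^sub>R N)"
      by (simp add: algebra_simps)
    then show ?thesis using ab by simp
  qed
  have "psd (a *\<^sub>R M + b *\<^sub>R N)" using M N ab by (intro psd_comb) (auto simp: test_def)
  moreover have "psd (mat 1 - (a *\<^sub>R M + b *\<^sub>R N))" unfolding e
    using M N ab by (intro psd_comb) (auto simp: test_def loewner_le_def)
  moreover have "tr_prod (a *\<^sub>R M + b *\<^sub>R N) \<rho> \<ge> r"
  proof -
    have "tr_prod (a *\<^sub>R M + b *\<^sub>R N) \<rho> = a * tr_prod M \<rho> + b * tr_prod N \<rho>" by (rule tr_prod_lin1)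
    also have "\<dots> \<ge> a * r + b * r" using M N ab by (intro add_mono mult_left_mono) auto
    moreover have "a * r + b * r = r" using ab by (metis distrib_right mult_1)
    ultimately show ?thesis by linarith
  qed
  ultimately show "a *\<^sub>R M + b *\<^sub>R N \<in> {M. test M \<and> tr_prod M \<rho> \<ge> r}"
    by (simp add: test_def loewner_le_def)
qed


lemma pow2neg_nonneg: "pow2neg x \<ge> 0"
  by (cases x) (auto simp: pow2neg_def)

theorem lemma5:
  fixes \<rho> :: "complex^('a::finite\<times>'b::finite)^('a\<times>'b)"
    and \<sigma> :: "complex^'b^'b"
    and S :: "(complex^'a^'a) set"
    and \<epsilon> :: real
  assumes "qstate \<rho>" and "qstate \<sigma>"
    and "0 < \<epsilon>" and "\<epsilon> < 1"
    and "convex S" and "\<forall>\<tau>\<in>S. qstate \<tau>"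
  shows "\<exists>M. test M \<and> tr_prod M \<rho> \<ge> 1 - \<epsilon> \<and>
           (\<forall>\<tau>\<in>S. tr_prod M (tensor \<tau> \<sigma>) \<le> pow2neg (I_H_tilde \<epsilon> S \<rho> \<sigma>))"
proof (rule ccontr)
  define I where "I = I_H_tilde \<epsilon> S \<rho> \<sigma>"
  define v where "v = pow2neg I"
  define T where "T = {M. test M \<and> tr_prod M \<rho> \<ge> 1 - \<epsilon>}"
  define g :: "complex^('a\<times>'b)^('a\<times>'b) \<Rightarrow> complex^'a^'a \<Rightarrow> real"
    where "g = (\<lambda>M \<tau>. tr_prod M (tensor \<tau> \<sigma>))"
  assume neg: "\<not> ?thesis"
  have H: "\<forall>M\<in>T. \<exists>\<tau>\<in>S. v < g M \<tau>"
    using neg by (auto simp: T_def g_def v_def I_def not_le)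
  have cT: "compact T" unfolding T_def by (rule compact_tests)
  have vT: "convex T" unfolding T_def by (rule convex_tests)
  have tr1: "tr_prod (mat 1) \<rho> = 1" using assms(1) by (simp add: tr_prod_one qstate_def)
  have oneT: "mat 1 \<in> T" unfolding T_def using test_one tr1 assms(3) by simp
  have contg: "\<And>\<tau>. continuous_on UNIV (\<lambda>M. g M \<tau>)" unfolding g_def by (rule tr_prod_cont)
  obtain F where F: "F \<subseteq> S" "finite F" "T \<subseteq> (\<Union>\<tau>\<in>F. {M. v < g M \<tau>})"
  proof (rule compactE_image[OF cT, of S "\<lambda>\<tau>. {M. v < g M \<tau>}"])
    show "\<And>\<tau>. \<tau> \<in> S \<Longrightarrow> open {M. v < g M \<tau>}"
      by (rule open_Collect_less[OF continuous_on_const contg])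
    show "T \<subseteq> (\<Union>\<tau>\<in>S. {M. v < g M \<tau>})" using H by blast
  qed
  have Fne: "F \<noteq> {}" using F(3) oneT by blast
  have lin1: "\<And>M N x t. g ((1-t) *\<^sub>R M + t *\<^sub>R N) x = (1-t) * g M x + t * g N x"
    unfolding g_def by (rule tr_prod_lin1)
  have lin2: "\<And>M x y t. g M ((1-t) *\<^sub>R x + t *\<^sub>R y) = (1-t) * g M x + t * g M y"
    unfolding g_def tensor_lin by (rule tr_prod_lin2)
  have "\<forall>M\<in>T. \<exists>\<tau>\<in>F. v < g M \<tau>" using F(3) by blast
  then obtain \<tau>s where \<tau>s: "\<tau>s \<in> convex hull F" "\<forall>M\<in>T. v < g M \<tau>s"
    using finite_minimax[OF lin1 lin2 contg F(2) Fne, of v] cT vT by blast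
  have \<tau>sS: "\<tau>s \<in> S" using \<tau>s(1) hull_minimal[of F S convex, OF F(1) assms(5)] by blast
  obtain M0 where M0: "M0 \<in> T" "\<forall>M\<in>T. g M0 \<tau>s \<le> g M \<tau>s"
    using continuous_attains_inf[OF cT _ continuous_on_subset[OF contg]] oneT by blast
  define m where "m = g M0 \<tau>s"
  have vm: "v < m" using \<tau>s(2) M0(1) by (simp add: m_def)
  have mpos: "0 < m" using vm pow2neg_nonneg[of I] by (simp add: v_def)
  have D_le: "D_H \<epsilon> \<rho> (tensor \<tau>s \<sigma>) \<le> ereal (- log 2 m)"
    unfolding D_H_def
  proof (rule Sup_least, clarify)
    fix M assume M: "test M" "1 - \<epsilon> \<le> tr_prod M \<rho>"
    hence "M \<in> T" by (simp add: T_def)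
    hence "m \<le> tr_prod M (tensor \<tau>s \<sigma>)" using M0(2) by (simp add: m_def g_def)
    then show "neglog2 (tr_prod M (tensor \<tau>s \<sigma>)) \<le> ereal (- log 2 m)"
      using mpos by (simp add: neglog2_def)
  qed
  have I_le: "I \<le> ereal (- log 2 m)"
    unfolding I_def I_H_tilde_def using \<tau>sS D_le by (meson INF_lower order_trans)
  have I_ge: "0 \<le> I"
    unfolding I_def I_H_tilde_def
  proof (rule INF_greatest)
    fix \<tau> assume "\<tau> \<in> S"
    hence "trace \<tau> = 1" using assms(6) by (simp add: qstate_def)
    hence "tr_prod (mat 1) (tensor \<tau> \<sigma>) = 1"
      using assms(2) by (simp add: tr_prod_one trace_tensor qstate_def)
    hence eq: "neglog2 (tr_prod (mat 1) (tensor \<tau> \<sigma>)) = 0" by (simp add: neglog2_def zero_ereal_def)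
    have mem: "neglog2 (tr_prod (mat 1) (tensor \<tau> \<sigma>)) \<in>
        {neglog2 (tr_prod M (tensor \<tau> \<sigma>)) | M. test M \<and> tr_prod M \<rho> \<ge> 1 - \<epsilon>}"
      using oneT by (auto simp: T_def)
    have "neglog2 (tr_prod (mat 1) (tensor \<tau> \<sigma>)) \<le>
        Sup {neglog2 (tr_prod M (tensor \<tau> \<sigma>)) | M. test M \<and> tr_prod M \<rho> \<ge> 1 - \<epsilon>}"
      using mem by (rule Sup_upper)
    then show "0 \<le> D_H \<epsilon> \<rho> (tensor \<tau> \<sigma>)" unfolding D_H_def eq .
  qed
  obtain r where r: "I = ereal r" using I_ge I_le by (cases I) auto
  have "r \<le> - log 2 m" using I_le r by simp
  hence "2 powr (log 2 m) \<le> 2 powr (- r)" by simp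
  hence "m \<le> v" using mpos by (simp add: v_def r pow2neg_def)
  with vm show False by simp
qed

end
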